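(* Let $S$ be a finite simple semigroup satisfying the quasi-identities $$\forall a\,\forall b\,\forall \alpha\,\forall\beta\ \big((a\alpha=a\beta)\to(b\alpha=b\beta)\big),\qquad \forall a\,\forall b\,\forall \alpha\,\forall\beta\ \big((\alpha a=\beta a)\to(\alpha b=\beta b)\big).$$ Then $S$ is a rectangular band of groups.
   Context: A semigroup is simple if its only two-sided ideal is itself. By the Sushkevich–Rees theorem, every finite simple semigroup is isomorphic to some $(G,P,\Lambda,I)$: the set of triples $(\lambda,g,i)$ with $g$ in a finite group $G$, $\lambda\in\Lambda$, $i\in I$ ($\Lambda,I$ finite), with multiplication $(\lambda,g,i)(\mu,h,j)=(\lambda,g\,p_{i\mu}h,j)$, where $P=(p_{i\mu})$ is an $|I|\times|\Lambda|$ matrix over $G$ whose first row and first column consist of $1$. A semigroup is a rectangular band of groups if it is isomorphic to such a $(G,P,\Lambda,I)$ with $p_{i\lambda}=1$ for all $i\in I,\lambda\in\Lambda$. *)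

theory Defs
  imports "HOL-Algebra.Group"
begin

definition is_semigroup :: "'a set \<Rightarrow> ('a \<Rightarrow> 'a \<Rightarrow> 'a) \<Rightarrow> bool" where
  "is_semigroup S smul \<longleftrightarrow>
     (\<forall>x\<in>S. \<forall>y\<in>S. smul x y \<in> S) \<and>
     (\<forall>x\<in>S. \<forall>y\<in>S. \<forall>z\<in>S. smul (smul x y) z = smul x (smul y z))"

definition two_sided_ideal :: "'a set \<Rightarrow> ('a \<Rightarrow> 'a \<Rightarrow> 'a) \<Rightarrow> 'a set \<Rightarrow> bool" where
  "two_sided_ideal S smul J \<longleftrightarrow> J \<subseteq> S \<and> J \<noteq> {} \<and>
     (\<forall>s\<in>S. \<forall>x\<in>J. smul s x \<in> J \<and> smul x s \<in> J)"

definition simple_semigroup :: "'a set \<Rightarrow> ('a \<Rightarrow> 'a \<Rightarrow> 'a) \<Rightarrow> bool" where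
  "simple_semigroup S smul \<longleftrightarrow> is_semigroup S smul \<and>
     (\<forall>J. two_sided_ideal S smul J \<longrightarrow> J = S)"

text \<open>Rectangular band of groups: S is isomorphic to (G,P,Lambda,I) with all p = 1, i.e. the set
  of triples (lambda,g,i) with product (lambda,g,i)(mu,h,j) = (lambda, g h, j).
  Since S is finite, the finite group G and the finite index sets Lambda, I may be taken
  to live in nat.\<close>
definition rectangular_band_of_groups :: "'a set \<Rightarrow> ('a \<Rightarrow> 'a \<Rightarrow> 'a) \<Rightarrow> bool" where
  "rectangular_band_of_groups S smul \<longleftrightarrow>
     (\<exists>(G :: nat monoid) (Lam :: nat set) (I :: nat set) (\<phi> :: nat \<times> nat \<times> nat \<Rightarrow> 'a).
        group G \<and> finite (carrier G) \<and> finite Lam \<and> finite I \<and>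
        bij_betw \<phi> (Lam \<times> carrier G \<times> I) S \<and>
        (\<forall>l\<in>Lam. \<forall>g\<in>carrier G. \<forall>i\<in>I. \<forall>m\<in>Lam. \<forall>h\<in>carrier G. \<forall>j\<in>I.
           smul (\<phi> (l, g, i)) (\<phi> (m, h, j)) = \<phi> (l, g \<otimes>\<^bsub>G\<^esub> h, j)))"

end

theory Submission
  imports Defs
begin

lemma idem_exists:
  fixes S :: "'a set" and smul :: "'a \<Rightarrow> 'a \<Rightarrow> 'a"
  assumes fin: "finite S" and ne: "S \<noteq> {}"
    and cl: "\<And>x y. x \<in> S \<Longrightarrow> y \<in> S \<Longrightarrow> smul x y \<in> S"
    and asc: "\<And>x y z. x \<in> S \<Longrightarrow> y \<in> S \<Longrightarrow> z \<in> S \<Longrightarrow> smul (smul x y) z = smul x (smul y z)"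
  shows "\<exists>e\<in>S. smul e e = e"
proof -
  obtain a where a: "a \<in> S" using ne by auto
  define pw where "pw n = ((smul a) ^^ n) a" for n
  have pwS: "pw n \<in> S" for n by (induct n) (auto simp: pw_def a cl)
  have pwSuc: "pw (Suc n) = smul a (pw n)" for n by (simp add: pw_def)
  have pwadd: "smul (pw i) (pw j) = pw (i + j + 1)" for i j
  proof (induct i)
    case 0 then show ?case by (simp add: pw_def)
  next
    case (Suc i)
    have "smul (pw (Suc i)) (pw j) = smul a (smul (pw i) (pw j))"
      by (simp add: pwSuc asc a pwS)
    also have "\<dots> = pw (Suc i + j + 1)" using Suc by (simp add: pwSuc)
    finally show ?case .
  qed
  have "\<not> inj pw"
  proof
    assume "inj pw"
    moreover have "finite (range pw)" using fin pwS by (meson finite_subset image_subsetI)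
    ultimately have "finite (UNIV :: nat set)" using finite_imageD by blast
    then show False by simp
  qed
  then obtain x y where xy: "x \<noteq> y" "pw x = pw y" unfolding inj_def by blast
  obtain m n where mn: "m < n" "pw m = pw n"
    using xy by (metis linorder_neqE_nat)
  define p where "p = n - m"
  have p1: "p \<ge> 1" using mn by (simp add: p_def)
  have per: "pw (k + p) = pw k" if "k \<ge> m" for k
    using that
  proof (induction k rule: dec_induct)
    case base then show ?case using mn by (simp add: p_def)
  next
    case (step k)
    have "pw (Suc k + p) = smul a (pw (k + p))" by (simp add: pwSuc)
    then show ?case using step by (simp add: pwSuc)
  qed
  have per2: "pw (k + c * p) = pw k" if "k \<ge> m" for k c
  proof (induct c)
    case 0 then show ?case by simp
  next
    case (Suc c)
    have "pw (k + Suc c * p) = pw ((k + c * p) + p)" by (simp add: algebra_simps)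
    also have "\<dots> = pw (k + c * p)" using that by (intro per) simp
    finally show ?case using Suc by simp
  qed
  define i where "i = (m + 1) * p - 1"
  have "(m + 1) * 1 \<le> (m + 1) * p" using p1 by (rule mult_le_mono2)
  then have "(m + 1) * p \<ge> m + 1" by simp
  then have im: "i \<ge> m" and ii: "i + 1 = (m + 1) * p" by (auto simp: i_def)
  have "smul (pw i) (pw i) = pw (i + (m + 1) * p)" using pwadd ii by (metis add.assoc)
  also have "\<dots> = pw i" using per2 im by blast
  finally show ?thesis using pwS by blast
qed

lemma transport_group:
  fixes A :: "'a set" and smul :: "'a \<Rightarrow> 'a \<Rightarrow> 'a"
  assumes fin: "finite A" and eA: "e \<in> A"
    and cl: "\<And>x y. x \<in> A \<Longrightarrow> y \<in> A \<Longrightarrow> smul x y \<in> A"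
    and asc: "\<And>x y z. x \<in> A \<Longrightarrow> y \<in> A \<Longrightarrow> z \<in> A \<Longrightarrow> smul (smul x y) z = smul x (smul y z)"
    and lone: "\<And>x. x \<in> A \<Longrightarrow> smul e x = x"
    and linv: "\<And>x. x \<in> A \<Longrightarrow> \<exists>u\<in>A. smul u x = e"
  shows "\<exists>(G :: nat monoid) h. group G \<and> finite (carrier G) \<and> bij_betw h (carrier G) A \<and>
     (\<forall>x\<in>carrier G. \<forall>y\<in>carrier G. h (x \<otimes>\<^bsub>G\<^esub> y) = smul (h x) (h y))"
proof -
  obtain h where h: "bij_betw h {0..<card A} A" using ex_bij_betw_nat_finite fin by blast
  define C where "C = {0..<card A}"
  define hi where "hi = the_inv_into C h"
  have hC: "bij_betw h C A" using h C_def by simp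
  have hiC: "x \<in> A \<Longrightarrow> hi x \<in> C" for x
    using bij_betw_the_inv_into[OF hC] hi_def bij_betwE by blast
  have hhi: "x \<in> A \<Longrightarrow> h (hi x) = x" for x
    using f_the_inv_into_f_bij_betw[OF hC] hi_def by blast
  have hA: "x \<in> C \<Longrightarrow> h x \<in> A" for x using hC bij_betwE by blast
  have hinj: "x \<in> C \<Longrightarrow> y \<in> C \<Longrightarrow> h x = h y \<Longrightarrow> x = y" for x y
    using hC unfolding bij_betw_def inj_on_def by blast
  define G where "G = \<lparr>carrier = C, mult = (\<lambda>x y. hi (smul (h x) (h y))), one = hi e\<rparr>"
  have cG: "carrier G = C" by (simp add: G_def)
  have mG: "x \<otimes>\<^bsub>G\<^esub> y = hi (smul (h x) (h y))" for x y by (simp add: G_def)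
  have oG: "\<one>\<^bsub>G\<^esub> = hi e" by (simp add: G_def)
  have hm: "x \<in> C \<Longrightarrow> y \<in> C \<Longrightarrow> h (x \<otimes>\<^bsub>G\<^esub> y) = smul (h x) (h y)" for x y
    by (simp add: mG hhi cl hA)
  have "group G"
  proof (rule groupI)
    fix x y assume "x \<in> carrier G" "y \<in> carrier G"
    then show "x \<otimes>\<^bsub>G\<^esub> y \<in> carrier G" by (simp add: cG mG hiC cl hA)
  next
    show "\<one>\<^bsub>G\<^esub> \<in> carrier G" by (simp add: cG oG hiC eA)
  next
    fix x y z assume xyz: "x \<in> carrier G" "y \<in> carrier G" "z \<in> carrier G"
    then have xyz': "x \<in> C" "y \<in> C" "z \<in> C" by (auto simp: cG)
    have c1: "x \<otimes>\<^bsub>G\<^esub> y \<in> C" "y \<otimes>\<^bsub>G\<^esub> z \<in> C" using xyz' by (simp_all add: mG hiC cl hA)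
    show "(x \<otimes>\<^bsub>G\<^esub> y) \<otimes>\<^bsub>G\<^esub> z = x \<otimes>\<^bsub>G\<^esub> (y \<otimes>\<^bsub>G\<^esub> z)"
      using c1 xyz' by (simp add: mG hhi cl hA asc)
  next
    fix x assume "x \<in> carrier G"
    then have x: "x \<in> C" by (simp add: cG)
    show "\<one>\<^bsub>G\<^esub> \<otimes>\<^bsub>G\<^esub> x = x"
      using x by (intro hinj) (simp_all add: mG oG hhi eA lone hA hiC cl)
  next
    fix x assume "x \<in> carrier G"
    then have x: "x \<in> C" by (simp add: cG)
    obtain u where u: "u \<in> A" "smul u (h x) = e" using linv hA x by blast
    show "\<exists>y\<in>carrier G. y \<otimes>\<^bsub>G\<^esub> x = \<one>\<^bsub>G\<^esub>"
      by (rule bexI[of _ "hi u"]) (simp_all add: mG oG hhi u cG hiC)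
  qed
  moreover have "finite (carrier G)" by (simp add: cG C_def)
  ultimately show ?thesis using hC hm cG by blast
qed

theorem lemma2:
  fixes S :: "'a set" and smul :: "'a \<Rightarrow> 'a \<Rightarrow> 'a"
  assumes "finite S"
    and "simple_semigroup S smul"
    and "\<forall>a\<in>S. \<forall>b\<in>S. \<forall>\<alpha>\<in>S. \<forall>\<beta>\<in>S. smul a \<alpha> = smul a \<beta> \<longrightarrow> smul b \<alpha> = smul b \<beta>"
    and "\<forall>a\<in>S. \<forall>b\<in>S. \<forall>\<alpha>\<in>S. \<forall>\<beta>\<in>S. smul \<alpha> a = smul \<beta> a \<longrightarrow> smul \<alpha> b = smul \<beta> b"
  shows "rectangular_band_of_groups S smul"
proof -
  from assms(2) have sg: "is_semigroup S smul"
    and idl: "\<And>J. two_sided_ideal S smul J \<Longrightarrow> J = S"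
    by (simp_all add: simple_semigroup_def)
  have cl[simp]: "\<And>x y. x \<in> S \<Longrightarrow> y \<in> S \<Longrightarrow> smul x y \<in> S"
    using sg by (simp add: is_semigroup_def)
  have asc[simp]: "\<And>x y z. x \<in> S \<Longrightarrow> y \<in> S \<Longrightarrow> z \<in> S \<Longrightarrow> smul (smul x y) z = smul x (smul y z)"
    using sg by (simp add: is_semigroup_def)
  have ass2: "\<And>p q r X. p \<in> S \<Longrightarrow> q \<in> S \<Longrightarrow> X \<in> S \<Longrightarrow> smul p q = r \<Longrightarrow> smul p (smul q X) = smul r X"
    by (metis asc)
  have Lq: "\<And>a b \<alpha> \<beta>. a \<in> S \<Longrightarrow> b \<in> S \<Longrightarrow> \<alpha> \<in> S \<Longrightarrow> \<beta> \<in> S \<Longrightarrow> smul a \<alpha> = smul a \<beta> \<Longrightarrow> smul b \<alpha> = smul b \<beta>"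
    using assms(3) by blast
  have Rq: "\<And>a b \<alpha> \<beta>. a \<in> S \<Longrightarrow> b \<in> S \<Longrightarrow> \<alpha> \<in> S \<Longrightarrow> \<beta> \<in> S \<Longrightarrow> smul \<alpha> a = smul \<beta> a \<Longrightarrow> smul \<alpha> b = smul \<beta> b"
    using assms(4) by blast
  show ?thesis
  proof (cases "S = {}")
    case True
    define G :: "nat monoid" where "G = \<lparr>carrier = {0}, mult = (\<lambda>x y. 0), one = 0\<rparr>"
    have "group G" by (rule groupI) (auto simp: G_def)
    then show ?thesis unfolding rectangular_band_of_groups_def True
      by (intro exI[of _ G] exI[of _ "{}"] exI[of _ "{}"] exI[of _ "\<lambda>_. undefined"])
         (simp add: G_def bij_betw_def)
  next
    case False
    obtain e where eS[simp]: "e \<in> S" and ee[simp]: "smul e e = e"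
      using idem_exists[OF assms(1) False cl asc] by blast
    have eeX[simp]: "smul e (smul e X) = smul e X" if "X \<in> S" for X
      using ass2[of e e X e] that by simp
    define G0 where "G0 = {x\<in>S. smul e x = x \<and> smul x e = x}"
    define Lm where "Lm = {f\<in>S. smul f f = f \<and> smul f e = f}"
    define Ii where "Ii = {f\<in>S. smul f f = f \<and> smul e f = f}"
    have G0cl: "smul x y \<in> G0" if "x \<in> G0" "y \<in> G0" for x y
      using that unfolding G0_def by (auto; metis asc eS)
    have eG0: "e \<in> G0" by (simp add: G0_def)
    have finG0: "finite G0" using assms(1) by (simp add: G0_def)
    have G0inv: "\<exists>u\<in>G0. smul u g = e \<and> smul g u = e" if g: "g \<in> G0" for g
    proof -
      have gS: "g \<in> S" using g by (simp add: G0_def)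
      have "(smul g) ` G0 = G0"
      proof (rule endo_inj_surj[OF finG0])
        show "smul g ` G0 \<subseteq> G0" using G0cl g by blast
        show "inj_on (smul g) G0"
        proof (rule inj_onI)
          fix x y assume xy: "x \<in> G0" "y \<in> G0" "smul g x = smul g y"
          then have "smul e x = smul e y" using Lq[of g e x y] gS by (simp add: G0_def)
          then show "x = y" using xy by (simp add: G0_def)
        qed
      qed
      then obtain u where u: "u \<in> G0" "smul g u = e" using eG0 by (metis imageE)
      have "(\<lambda>x. smul x g) ` G0 = G0"
      proof (rule endo_inj_surj[OF finG0])
        show "(\<lambda>x. smul x g) ` G0 \<subseteq> G0" using G0cl g by blast
        show "inj_on (\<lambda>x. smul x g) G0"
        proof (rule inj_onI)
          fix x y assume xy: "x \<in> G0" "y \<in> G0" "smul x g = smul y g"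
          then have "smul x e = smul y e" using Rq[of g e x y] gS by (simp add: G0_def)
          then show "x = y" using xy by (simp add: G0_def)
        qed
      qed
      then obtain v where v: "v \<in> G0" "smul v g = e" using eG0 by (metis (no_types, lifting) imageE)
      have "v = smul v e" using v by (simp add: G0_def)
      also have "\<dots> = smul (smul v g) u"
        using u v gS asc[of v g u] by (auto simp: G0_def)
      also have "\<dots> = u" using u v by (simp add: G0_def)
      finally show ?thesis using u v by blast
    qed
    have fL: "smul b f = smul b e" if "f \<in> Lm" "b \<in> S" for f b
      using that Lq[of f b f e] by (simp add: Lm_def)
    have fI: "smul f b = smul e b" if "f \<in> Ii" "b \<in> S" for f b
      using that Rq[of f b f e] by (simp add: Ii_def)
    have IL: "smul f' f = e" if "f' \<in> Ii" "f \<in> Lm" for f f'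
    proof -
      have "f \<in> S" using that by (simp add: Lm_def)
      then have "smul f' f = smul e f" using fI that by blast
      also have "\<dots> = smul e e" using fL[OF that(2) eS] by simp
      finally show ?thesis by simp
    qed
    define psi where "psi = (\<lambda>(f, g, f'). smul (smul f g) f')"
    have psi_mult: "smul (psi (f, a, f')) (psi (m, b, j)) = psi (f, smul a b, j)"
      if "f \<in> Lm" "a \<in> G0" "f' \<in> Ii" "m \<in> Lm" "b \<in> G0" "j \<in> Ii" for f a f' m b j
    proof -
      have S: "f \<in> S" "a \<in> S" "f' \<in> S" "m \<in> S" "b \<in> S" "j \<in> S"
        using that by (auto simp: Lm_def Ii_def G0_def)
      have "smul f' (smul m (smul b j)) = smul e (smul b j)"
        by (rule ass2) (use S IL that in auto)
      moreover have "smul a (smul e (smul b j)) = smul a (smul b j)"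
        by (rule ass2) (use S that in \<open>auto simp: G0_def\<close>)
      ultimately show ?thesis using S by (simp add: psi_def)
    qed
    have psi_inj: "inj_on psi (Lm \<times> G0 \<times> Ii)"
    proof (rule inj_onI)
      fix x y assume xy: "x \<in> Lm \<times> G0 \<times> Ii" "y \<in> Lm \<times> G0 \<times> Ii" "psi x = psi y"
      obtain f g f' m h j where xy': "x = (f, g, f')" "y = (m, h, j)" by (cases x, cases y) auto
      have A: "f \<in> Lm" "g \<in> G0" "f' \<in> Ii" "m \<in> Lm" "h \<in> G0" "j \<in> Ii"
        using xy xy' by auto
      have eq: "psi (f, g, f') = psi (m, h, j)" using xy xy' by simp
      have S: "f \<in> S" "g \<in> S" "f' \<in> S" "m \<in> S" "h \<in> S" "j \<in> S"
        using A by (auto simp: Lm_def Ii_def G0_def)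
      have ef: "smul e x = e" if "x \<in> Lm" for x using fL[OF that eS] by simp
      have fe: "smul x e = e" if "x \<in> Ii" for x using fI[OF that eS] by simp
      have k1: "smul e (psi (x, y, z)) = smul y z" if "x \<in> Lm" "y \<in> G0" "z \<in> Ii" for x y z
      proof -
        have "x \<in> S" "y \<in> S" "z \<in> S" using that by (auto simp: Lm_def Ii_def G0_def)
        moreover have "smul e (smul y z) = smul y z"
          using ass2[of e y z y] that(2) calculation by (simp add: G0_def)
        ultimately show ?thesis using ass2[of e x "smul y z" e] ef[OF that(1)] that(2)
          by (simp add: psi_def G0_def)
      qed
      have k2: "smul (psi (x, y, z)) e = smul x y" if "x \<in> Lm" "y \<in> G0" "z \<in> Ii" for x y z
      proof -
        have "x \<in> S" "y \<in> S" "z \<in> S" using that by (auto simp: Lm_def Ii_def G0_def)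
        then show ?thesis using fe[OF that(3)] that(2)
          by (simp add: psi_def G0_def)
      qed
      have k3: "smul (smul y z) e = y" if "y \<in> G0" "z \<in> Ii" for y z
      proof -
        have "y \<in> S" "z \<in> S" using that by (auto simp: Lm_def Ii_def G0_def)
        then show ?thesis using fe[OF that(2)] that(1) by (simp add: G0_def)
      qed
      have gh: "g = h" using k1[OF A(1-3)] k1[OF A(4-6)] k3[OF A(2,3)] k3[OF A(5,6)] eq by simp
      obtain u where u: "u \<in> G0" "smul u g = e" "smul g u = e" using G0inv A(2) by blast
      have uS: "u \<in> S" using u by (simp add: G0_def)
      have fg: "smul f g = smul m g" using k2[OF A(1-3)] k2[OF A(4-6)] eq gh by simp
      have "f = smul f e" using A by (simp add: Lm_def)
      also have "\<dots> = smul (smul f g) u" using u uS S by simp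
      also have "\<dots> = smul (smul m g) u" using fg by simp
      also have "\<dots> = m" using u uS S A by (simp add: Lm_def)
      finally have fm: "f = m" .
      have gf: "smul g f' = smul g j" using k1[OF A(1-3)] k1[OF A(4-6)] eq gh by simp
      have "f' = smul e f'" using A by (simp add: Ii_def)
      also have "\<dots> = smul u (smul g f')" using u uS S by (simp flip: asc)
      also have "\<dots> = smul u (smul g j)" using gf by simp
      also have "\<dots> = j" using u uS S A by (simp add: Ii_def flip: asc)
      finally show "x = y" using fm gh xy' by simp
    qed
    have psi_surj: "psi ` (Lm \<times> G0 \<times> Ii) = S"
    proof
      show "psi ` (Lm \<times> G0 \<times> Ii) \<subseteq> S"
        by (auto simp: psi_def Lm_def G0_def Ii_def)
    next
      show "S \<subseteq> psi ` (Lm \<times> G0 \<times> Ii)"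
      proof
        fix x assume xS: "x \<in> S"
        define J where "J = {smul (smul s e) t | s t. s \<in> S \<and> t \<in> S}"
        have "two_sided_ideal S smul J"
          unfolding two_sided_ideal_def
        proof (intro conjI ballI)
          show "J \<subseteq> S" by (auto simp: J_def)
          show "J \<noteq> {}" unfolding J_def using eS by blast
          fix s y assume sy: "s \<in> S" "y \<in> J"
          then obtain p q where pq: "p \<in> S" "q \<in> S" "y = smul (smul p e) q" by (auto simp: J_def)
          have "smul s y = smul (smul (smul s p) e) q" using pq sy by simp
          moreover have "smul s p \<in> S" using pq sy by simp
          ultimately show "smul s y \<in> J" using pq sy unfolding J_def by blast
          have "smul y s = smul (smul p e) (smul q s)" using pq sy by simp
          moreover have "smul q s \<in> S" using pq sy by simp
          ultimately show "smul y s \<in> J" using pq sy unfolding J_def by blast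
        qed
        then have "J = S" by (rule idl)
        then obtain s t where st: "s \<in> S" "t \<in> S" "x = smul (smul s e) t"
          using xS unfolding J_def by blast
        define a where "a = smul e (smul s e)"
        define b where "b = smul e (smul t e)"
        have aG: "a \<in> G0" "b \<in> G0" using st by (auto simp: a_def b_def G0_def)
        obtain a' where a': "a' \<in> G0" "smul a' a = e" "smul a a' = e" using G0inv aG by blast
        obtain b' where b': "b' \<in> G0" "smul b' b = e" "smul b b' = e" using G0inv aG by blast
        have S: "a \<in> S" "b \<in> S" "a' \<in> S" "b' \<in> S"
          using aG a' b' by (auto simp: G0_def)
        have Eq: "smul a' e = a'" "smul e a' = a'" "smul b' e = b'" "smul e b' = b'"
          using a' b' by (auto simp: G0_def)
        have q1: "smul a' (smul s e) = e"
        proof -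
          have "smul a' (smul s e) = smul (smul a' e) (smul s e)" using Eq by simp
          also have "\<dots> = smul a' a" using S st by (simp add: a_def)
          finally show ?thesis using a' by simp
        qed
        have q2: "smul (smul e t) b' = e"
        proof -
          have "smul (smul e t) b' = smul (smul e t) (smul e b')" using Eq by simp
          also have "\<dots> = smul b b'" using S st by (simp add: b_def)
          finally show ?thesis using b' by simp
        qed
        define f where "f = smul (smul s e) a'"
        define f' where "f' = smul b' (smul e t)"
        have fLm: "f \<in> Lm"
        proof -
          have "smul f f = smul (smul s e) (smul (smul a' (smul s e)) a')"
            using S st by (simp add: f_def)
          also have "\<dots> = smul (smul s e) (smul e a')" by (simp only: q1)
          also have "\<dots> = f" using Eq by (simp add: f_def)
          finally have ff: "smul f f = f" .
          have "smul f e = f" using S st Eq by (simp add: f_def)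
          then show ?thesis using ff S st by (simp add: Lm_def f_def)
        qed
        have fIi: "f' \<in> Ii"
        proof -
          have "smul f' f' = smul b' (smul (smul (smul e t) b') (smul e t))"
            using S st by (simp add: f'_def)
          also have "\<dots> = smul b' (smul e (smul e t))" by (simp only: q2)
          also have "\<dots> = f'" using S st by (simp add: f'_def)
          finally have ff: "smul f' f' = f'" .
          have "smul e f' = smul (smul e b') (smul e t)" using S st by (simp add: f'_def)
          also have "\<dots> = f'" using Eq by (simp only: f'_def)
          finally have "smul e f' = f'" .
          then show ?thesis using ff S st by (simp add: Ii_def f'_def)
        qed
        have abG: "smul a b \<in> G0" using G0cl aG by blast
        have "psi (f, smul a b, f') = smul s (smul e (smul a' (smul a (smul b (smul b' (smul e t))))))"
          using S st by (simp add: psi_def f_def f'_def)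
        also have "\<dots> = smul s (smul e (smul e (smul e (smul e t))))"
          using ass2[OF S(3) S(1) _ a'(2)] ass2[OF S(2) S(4) _ b'(3)] S st by simp
        also have "\<dots> = x" using st by simp
        finally show "x \<in> psi ` (Lm \<times> G0 \<times> Ii)" using fLm fIi abG by force
      qed
    qed
    have psi_bij: "bij_betw psi (Lm \<times> G0 \<times> Ii) S"
      using psi_inj psi_surj by (simp add: bij_betw_def)
    obtain G :: "nat monoid" and hG where G: "group G" "finite (carrier G)" "bij_betw hG (carrier G) G0"
      "\<forall>x\<in>carrier G. \<forall>y\<in>carrier G. hG (x \<otimes>\<^bsub>G\<^esub> y) = smul (hG x) (hG y)"
    proof -
      have a1: "\<And>x y z. x \<in> G0 \<Longrightarrow> y \<in> G0 \<Longrightarrow> z \<in> G0 \<Longrightarrow> smul (smul x y) z = smul x (smul y z)"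
        by (simp add: G0_def)
      have a2: "\<And>x. x \<in> G0 \<Longrightarrow> smul e x = x" by (simp add: G0_def)
      have a3: "\<And>x. x \<in> G0 \<Longrightarrow> \<exists>u\<in>G0. smul u x = e" using G0inv by blast
      show ?thesis using transport_group[OF finG0 eG0 G0cl a1 a2 a3] that by blast
    qed
    have finL: "finite Lm" "finite Ii" using assms(1) by (auto simp: Lm_def Ii_def)
    obtain hL where hL: "bij_betw hL {0..<card Lm} Lm" using ex_bij_betw_nat_finite finL by blast
    obtain hI where hI: "bij_betw hI {0..<card Ii} Ii" using ex_bij_betw_nat_finite finL by blast
    define phi where "phi = psi \<circ> map_prod hL (map_prod hG hI)"
    have bij: "bij_betw phi ({0..<card Lm} \<times> carrier G \<times> {0..<card Ii}) S"
      unfolding phi_def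
      by (rule bij_betw_trans[OF bij_betw_map_prod[OF hL bij_betw_map_prod[OF G(3) hI]] psi_bij])
    have mult: "smul (phi (l, g, i)) (phi (m, h, j)) = phi (l, g \<otimes>\<^bsub>G\<^esub> h, j)"
      if "l \<in> {0..<card Lm}" "g \<in> carrier G" "i \<in> {0..<card Ii}"
         "m \<in> {0..<card Lm}" "h \<in> carrier G" "j \<in> {0..<card Ii}" for l g i m h j
    proof -
      have "hL l \<in> Lm" "hL m \<in> Lm" using hL that bij_betwE by blast+
      moreover have "hI i \<in> Ii" "hI j \<in> Ii" using hI that bij_betwE by blast+
      moreover have "hG g \<in> G0" "hG h \<in> G0" using G(3) that bij_betwE by blast+
      ultimately show ?thesis using psi_mult G(4) that by (simp add: phi_def)
    qed
    have mult': "\<forall>l\<in>{0..<card Lm}. \<forall>g\<in>carrier G. \<forall>i\<in>{0..<card Ii}. \<forall>m\<in>{0..<card Lm}. \<forall>h\<in>carrier G. \<forall>j\<in>{0..<card Ii}.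
           smul (phi (l, g, i)) (phi (m, h, j)) = phi (l, g \<otimes>\<^bsub>G\<^esub> h, j)"
      using mult by blast
    have fin2: "finite {0..<card Lm}" "finite {0..<card Ii}" by simp_all
    show ?thesis unfolding rectangular_band_of_groups_def
      using G(1,2) fin2 bij mult' by blast
  qed
qed

end
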